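(* Let $\tilde\omega=(\ell_1/t_1,\dots,\ell_\nu/t_\nu)\in\mathbb Q^\nu\setminus\{0\}$ with $\ell_j\in\mathbb Z$, $t_j\in\mathbb Z_{\ge1}$. Suppose $0<a_0<1$, $\nu<b_0<\infty$, $\bar R_0>0$ with $\bar R_0^{\,b_0}>\prod_jt_j$, and $|n\cdot\tilde\omega|\ge a_0|n|^{-b_0}$ for all $n\in\mathbb Z^\nu$ with $0<|n|\le\bar R_0$. Then $|\mathfrak n\tilde\omega|\ge a_0|\mathfrak n|^{-b_0}$ for every $\mathfrak n\in\mathfrak Z(\tilde\omega)\setminus\{0\}$.
   Context: $|\cdot|$ is a fixed norm on $\mathbb R^\nu$ restricted to $\mathbb Z^\nu$, and $n\cdot\tilde\omega$ is the usual dot product. $\mathfrak N(\tilde\omega)=\{n\in\mathbb Z^\nu:n\cdot\tilde\omega=0\}$ and $\mathfrak Z(\tilde\omega)=\mathbb Z^\nu/\mathfrak N(\tilde\omega)$. For a coset $\mathfrak n$, $|\mathfrak n|=\min\{|n|:n\in\mathfrak n\}$ and $\mathfrak n\tilde\omega:=n\cdot\tilde\omega$ for any $n\in\mathfrak n$ (independent of the choice). *)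

theory Defs
  imports "HOL-Analysis.Analysis"
begin

definition is_norm :: "(real ^ 'n \<Rightarrow> real) \<Rightarrow> bool" where
  "is_norm N \<longleftrightarrow>
     (\<forall>x. N x \<ge> 0) \<and> (\<forall>x. N x = 0 \<longleftrightarrow> x = 0) \<and>
     (\<forall>c x. N (c *\<^sub>R x) = \<bar>c\<bar> * N x) \<and>
     (\<forall>x y. N (x + y) \<le> N x + N y)"

definition int_vecs :: "(real ^ 'n) set" where
  "int_vecs = {n. \<forall>i. n $ i \<in> \<int>}"

definition resonant :: "real ^ 'n \<Rightarrow> (real ^ 'n) set" where
  "resonant \<omega> = {n \<in> int_vecs. n \<bullet> \<omega> = 0}"

definition coset_of :: "real ^ 'n \<Rightarrow> real ^ 'n \<Rightarrow> (real ^ 'n) set" where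
  "coset_of \<omega> n = {m \<in> int_vecs. m - n \<in> resonant \<omega>}"

definition quot :: "real ^ 'n \<Rightarrow> (real ^ 'n) set set" where
  "quot \<omega> = coset_of \<omega> ` int_vecs"

text \<open>|coset| = min of N over the coset (the minimum is attained; Inf is used).\<close>
definition coset_norm :: "(real ^ 'n \<Rightarrow> real) \<Rightarrow> (real ^ 'n) set \<Rightarrow> real" where
  "coset_norm N C = Inf (N ` C)"

text \<open>coset omega := n . omega for any representative n (well defined).\<close>
definition coset_val :: "real ^ 'n \<Rightarrow> (real ^ 'n) set \<Rightarrow> real" where
  "coset_val \<omega> C = (SOME n. n \<in> C) \<bullet> \<omega>"

end

theory Submission
  imports Defs
begin

lemma int_mult_inner:
  fixes t l :: "'n::finite \<Rightarrow> int" and m :: "real ^ 'n"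
  assumes t_pos: "\<forall>j. t j \<ge> 1" and m: "m \<in> int_vecs"
  shows "real_of_int (\<Prod>j\<in>UNIV. t j) * (m \<bullet> (\<chi> j. real_of_int (l j) / real_of_int (t j))) \<in> \<int>"
proof -
  have "real_of_int (\<Prod>j\<in>UNIV. t j) * (m \<bullet> (\<chi> j. real_of_int (l j) / real_of_int (t j)))
     = (\<Sum>j\<in>UNIV. real_of_int (\<Prod>j\<in>UNIV. t j) * (m $ j * (real_of_int (l j) / real_of_int (t j))))"
    by (simp add: inner_vec_def sum_distrib_left)
  also have "\<dots> \<in> \<int>"
  proof (rule Ints_sum)
    fix j :: 'n
    have tj: "real_of_int (t j) \<noteq> 0" using t_pos by (metis of_int_0_eq_iff not_one_le_zero)
    have P: "(\<Prod>j\<in>UNIV. t j) = t j * (\<Prod>i\<in>UNIV - {j}. t i)"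
      by (simp add: prod.remove)
    have mj: "m $ j \<in> \<int>" using m by (simp add: int_vecs_def)
    have "real_of_int (\<Prod>j\<in>UNIV. t j) * (m $ j * (real_of_int (l j) / real_of_int (t j)))
        = m $ j * (real_of_int (l j) * real_of_int (\<Prod>i\<in>UNIV - {j}. t i))"
      unfolding P using tj by (simp add: field_simps)
    also have "\<dots> \<in> \<int>" using mj by (intro Ints_mult) auto
    finally show "real_of_int (\<Prod>j\<in>UNIV. t j) * (m $ j * (real_of_int (l j) / real_of_int (t j))) \<in> \<int>" .
  qed
  finally show ?thesis .
qed

theorem mainTheorem8:
  fixes N :: "real ^ 'n \<Rightarrow> real"
    and l t :: "'n \<Rightarrow> int"
    and a0 b0 R0 :: real
  assumes normN: "is_norm N"
    and t_pos: "\<forall>j. t j \<ge> 1"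
    and omega_nz: "(\<chi> j. real_of_int (l j) / real_of_int (t j)) \<noteq> 0"
    and a0: "0 < a0" "a0 < 1"
    and b0: "real CARD('n) < b0"
    and R0: "R0 > 0" "R0 powr b0 > real_of_int (\<Prod>j\<in>UNIV. t j)"
    and dioph: "\<forall>n \<in> int_vecs. 0 < N n \<and> N n \<le> R0 \<longrightarrow>
        \<bar>n \<bullet> (\<chi> j. real_of_int (l j) / real_of_int (t j))\<bar> \<ge> a0 * N n powr (- b0)"
  shows "\<forall>C \<in> quot (\<chi> j. real_of_int (l j) / real_of_int (t j)).
           C \<noteq> resonant (\<chi> j. real_of_int (l j) / real_of_int (t j)) \<longrightarrow>
           \<bar>coset_val (\<chi> j. real_of_int (l j) / real_of_int (t j)) C\<bar>
             \<ge> a0 * coset_norm N C powr (- b0)"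
proof (intro ballI impI)
  define \<omega> where "\<omega> = (\<chi> j. real_of_int (l j) / real_of_int (t j))"
  define T where "T = real_of_int (\<Prod>j\<in>UNIV. t j)"
  fix C assume CQ: "C \<in> quot \<omega>" and Cne: "C \<noteq> resonant \<omega>"
  from CQ obtain n0 where n0: "n0 \<in> int_vecs" "C = coset_of \<omega> n0" by (auto simp: quot_def)
  have memC: "m \<in> C \<longleftrightarrow> m \<in> int_vecs \<and> m \<bullet> \<omega> = n0 \<bullet> \<omega>" for m
    using n0 by (auto simp: coset_of_def resonant_def int_vecs_def inner_diff_left)
  have n0C: "n0 \<in> C" using memC n0 by auto
  define v where "v = n0 \<bullet> \<omega>"
  have cv: "coset_val \<omega> C = v"
    unfolding coset_val_def v_def using someI[of "\<lambda>x. x \<in> C", OF n0C] memC by auto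
  have vnz: "v \<noteq> 0"
  proof
    assume "v = 0"
    hence "C = resonant \<omega>" using memC by (auto simp: resonant_def v_def)
    thus False using Cne by simp
  qed
  have Tpos: "T \<ge> 1"
  proof -
    have "(\<Prod>j\<in>UNIV. t j) \<ge> 1" using t_pos by (intro prod_ge_1) auto
    thus ?thesis unfolding T_def by (metis of_int_1_le_iff)
  qed
  have Tv: "T * v \<in> \<int>" unfolding T_def v_def \<omega>_def using int_mult_inner[OF t_pos n0(1)] .
  have "\<bar>T * v\<bar> \<ge> 1" using Tv vnz Tpos Ints_nonzero_abs_ge1 by fastforce
  hence vT: "\<bar>v\<bar> \<ge> 1 / T" using Tpos by (simp add: abs_mult field_simps)
  have b0pos: "b0 > 0" using b0 by (metis of_nat_0_less_iff zero_less_card_finite less_trans)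
  have Np: "\<forall>x. N x \<ge> 0" "\<forall>x. N x = 0 \<longleftrightarrow> x = 0" using normN by (auto simp: is_norm_def)
  have R0inv: "R0 powr (- b0) < 1 / T"
  proof -
    have "R0 powr (- b0) = 1 / R0 powr b0" by (simp add: powr_minus divide_inverse)
    also have "\<dots> < 1 / T" using R0 Tpos unfolding T_def by (intro divide_strict_left_mono) auto
    finally show ?thesis .
  qed
  have each: "\<bar>v\<bar> \<ge> a0 * N m powr (- b0)" if mC: "m \<in> C" for m
  proof -
    have mi: "m \<in> int_vecs" and mv: "m \<bullet> \<omega> = v" using memC mC v_def by auto
    have "m \<noteq> 0" using mv vnz by auto
    hence Nm: "N m > 0" using Np by (metis order_le_less)
    show ?thesis
    proof (cases "N m \<le> R0")
      case True thus ?thesis using dioph mi Nm mv unfolding \<omega>_def by auto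
    next
      case False
      have "a0 * N m powr (- b0) \<le> N m powr (- b0)" using a0 by (intro mult_left_le_one_le) auto
      also have "\<dots> \<le> R0 powr (- b0)" using False R0 b0pos
        by (intro powr_mono2') auto
      finally show ?thesis using R0inv vT by linarith
    qed
  qed
  define c where "c = Inf (N ` C)"
  show "\<bar>coset_val \<omega> C\<bar> \<ge> a0 * coset_norm N C powr (- b0)"
  proof (cases "c > 0")
    case False
    have "c \<ge> 0" unfolding c_def using n0C Np by (intro cInf_greatest) auto
    with False have "c = 0" by simp
    thus ?thesis by (simp add: coset_norm_def c_def[symmetric])
  next
    case True
    define x where "x = (\<bar>v\<bar> / a0) powr (- 1 / b0)"
    have va: "\<bar>v\<bar> / a0 > 0" using vnz a0 by auto
    have "x \<le> c" unfolding c_def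
    proof (rule cInf_greatest)
      show "N ` C \<noteq> {}" using n0C by auto
    next
      fix y assume "y \<in> N ` C"
      then obtain m where m: "m \<in> C" "y = N m" by auto
      have "m \<noteq> 0" using m memC vnz v_def by auto
      hence Nm: "N m > 0" using Np by (metis order_le_less)
      have "N m powr (- b0) \<le> \<bar>v\<bar> / a0" using each[OF m(1)] a0 by (simp add: field_simps)
      hence "(N m powr (- b0)) powr (- 1 / b0) \<ge> (\<bar>v\<bar> / a0) powr (- 1 / b0)"
        using Nm b0pos by (intro powr_mono2') auto
      moreover have "(N m powr (- b0)) powr (- 1 / b0) = N m"
        using b0pos Nm by (simp add: powr_powr)
      ultimately show "x \<le> y" using m x_def by simp
    qed
    have xpos: "x > 0" using va x_def vnz a0 by simp
    have "c powr (- b0) \<le> x powr (- b0)" using \<open>x \<le> c\<close> xpos b0pos by (intro powr_mono2') auto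
    also have "x powr (- b0) = \<bar>v\<bar> / a0" using va b0pos a0 by (simp add: x_def powr_powr)
    finally have "a0 * c powr (- b0) \<le> \<bar>v\<bar>" using a0 by (simp add: field_simps)
    thus ?thesis by (simp add: coset_norm_def c_def cv)
  qed
qed

end
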